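(* Let $m_A=0.307394561088771942$, $M_A=0.307396653842409774$, $m_B=0.451388989838190632$, $M_B=0.451676307610047724$. Let $(x_n)_{n\ge0}$ and $(s_n)_{n\ge0}$ be sequences of positive reals such that for every $n$: if $x_n\ge s_n$ (an "A-burst" at step $n$), then $x_{n+1}\in[m_Ax_n,M_Ax_n]$ and $s_{n+1}=s_n$; if $x_n<s_n$ (a "B-burst" at step $n$), then $s_{n+1}\in[m_Bs_n,M_Bs_n]$ and $x_{n+1}=x_n$. Let $r_n=x_n/s_n$. Then for all sufficiently large $n$, $r_n\in[m_A,1/m_B]$, and moreover (i) every maximal run of consecutive A-bursts eventually has length exactly $1$; (ii) every maximal run of consecutive B-bursts eventually has length at most $2$. Consequently, eventually every block of three consecutive steps contains at least one A-burst and at least one B-burst, and $x_n+s_n\to0$.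
   Context: This is the burst-ratio dynamics of AdaBoost on a product of two gadgets: $x_n$ and $s_n$ are the principal (dominant-eigendirection) coordinates of the two gadgets at the $n$th burst boundary, the A-gadget wins burst $n$ exactly when $x_n\ge s_n$ (ties to A), and a winning gadget's coordinate contracts by a factor in the stated interval while the other is unchanged. *)

theory Defs
  imports Complex_Main
begin

definition mA :: real where "mA = 0.307394561088771942"
definition MA :: real where "MA = 0.307396653842409774"
definition mB :: real where "mB = 0.451388989838190632"
definition MB :: real where "MB = 0.451676307610047724"

end

theory Submission
  imports Defs
begin

lemma consts_facts: "0 < mA" "mA < 1" "MA < mB" "0 < mB" "mB \<le> MB" "MB < 1"
  "MB * MB \<le> mA" "mA \<le> MA" "0 < MA" "MA < 1"
  by (simp_all add: mA_def MA_def mB_def MB_def)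

lemma decay_helper:
  fixes y :: "nat \<Rightarrow> real" and c :: real
  assumes ypos: "\<And>n. y n \<ge> 0" and dec: "\<And>n. y (Suc n) \<le> y n"
    and c: "0 < c" "c < 1"
    and ev: "\<And>n. n \<ge> N \<Longrightarrow> \<exists>k\<in>{n..n+2}. y (Suc k) \<le> c * y k"
  shows "y \<longlonglongrightarrow> 0"
proof -
  have mono: "y (n + m) \<le> y n" for n m
    by (induction m) (auto intro: order_trans[OF dec])
  have step: "y (n + 3) \<le> c * y n" if nN: "n \<ge> N" for n
  proof -
    obtain k where k: "k \<in> {n..n+2}" "y (Suc k) \<le> c * y k" using ev[OF nN] by blast
    have a: "y k \<le> y n" using mono[of n "k - n"] k(1) by simp
    have "Suc k + (n + 2 - k) = n + 3" using k(1) by simp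
    then have b: "y (n+3) \<le> y (Suc k)" using mono[of "Suc k" "n + 2 - k"] by (simp add: numeral_3_eq_3)
    have "c * y k \<le> c * y n" using a c by (intro mult_left_mono) auto
    then show ?thesis using b k(2) by linarith
  qed
  have sub: "y (N + 3 * k) \<le> c ^ k * y N" for k
  proof (induction k)
    case 0 then show ?case by simp
  next
    case (Suc k)
    have "y (N + 3 * Suc k) = y ((N + 3 * k) + 3)" by (simp add: algebra_simps)
    also have "\<dots> \<le> c * y (N + 3 * k)" by (rule step) simp
    also have "\<dots> \<le> c * (c ^ k * y N)" using Suc c by simp
    finally show ?case by (simp add: algebra_simps)
  qed
  have "decseq y" using dec by (simp add: decseq_Suc_iff)
  then obtain L where L: "y \<longlonglongrightarrow> L" using decseq_convergent[of y 0] ypos by blast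
  have "strict_mono (\<lambda>k. N + 3 * k)" by (simp add: strict_mono_def)
  from LIMSEQ_subseq_LIMSEQ[OF L this] have L2: "(\<lambda>k. y (N + 3 * k)) \<longlonglongrightarrow> L"
    by (simp add: o_def)
  have "(\<lambda>k. c ^ k * y N) \<longlonglongrightarrow> 0 * y N"
    by (intro tendsto_mult tendsto_const LIMSEQ_power_zero) (use c in auto)
  then have Z: "(\<lambda>k. c ^ k * y N) \<longlonglongrightarrow> 0" by simp
  have "(\<lambda>k. y (N + 3 * k)) \<longlonglongrightarrow> 0"
    by (rule tendsto_sandwich[OF _ _ tendsto_const Z]) (use ypos sub in \<open>auto intro: always_eventually\<close>)
  with L2 have "L = 0" using LIMSEQ_unique by blast
  with L show ?thesis by simp
qed

theorem lemma6:
  fixes x s :: "nat \<Rightarrow> real"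
  assumes xpos: "\<And>n. x n > 0"
    and spos: "\<And>n. s n > 0"
    and Aburst: "\<And>n. x n \<ge> s n \<Longrightarrow>
                   x (Suc n) \<in> {mA * x n .. MA * x n} \<and> s (Suc n) = s n"
    and Bburst: "\<And>n. x n < s n \<Longrightarrow>
                   s (Suc n) \<in> {mB * s n .. MB * s n} \<and> x (Suc n) = x n"
  shows "(\<forall>\<^sub>F n in sequentially. x n / s n \<in> {mA .. 1 / mB})
    \<and> (\<forall>\<^sub>F n in sequentially. x n \<ge> s n \<longrightarrow> \<not> (x (Suc n) \<ge> s (Suc n)))
    \<and> (\<forall>\<^sub>F n in sequentially.
          \<not> (x n < s n \<and> x (n+1) < s (n+1) \<and> x (n+2) < s (n+2)))
    \<and> (\<forall>\<^sub>F n in sequentially.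
          (\<exists>k\<in>{n..n+2}. x k \<ge> s k) \<and> (\<exists>k\<in>{n..n+2}. x k < s k))
    \<and> ((\<lambda>n. x n + s n) \<longlonglongrightarrow> 0)"
proof -
  note C = consts_facts
  define r where "r n = x n / s n" for n
  have rpos: "r n > 0" for n using xpos spos by (simp add: r_def)
  have iff: "x n \<ge> s n \<longleftrightarrow> r n \<ge> 1" for n using spos[of n] by (simp add: r_def)
  have rA: "mA * r n \<le> r (Suc n) \<and> r (Suc n) \<le> MA * r n" if "r n \<ge> 1" for n
  proof -
    from Aburst[of n] that iff have h: "mA * x n \<le> x (Suc n)" "x (Suc n) \<le> MA * x n"
      "s (Suc n) = s n" by auto
    show ?thesis unfolding r_def h(3) using h(1,2) spos[of n]
      by (auto simp: divide_right_mono[of _ _ "s n", simplified] field_simps)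
  qed
  have rB: "r n / MB \<le> r (Suc n) \<and> r (Suc n) \<le> r n / mB" if "r n < 1" for n
  proof -
    have "x n < s n" using that iff[of n] by (simp add: not_le[symmetric])
    with Bburst[of n] have h: "mB * s n \<le> s (Suc n)" "s (Suc n) \<le> MB * s n"
      "x (Suc n) = x n" by (auto simp: not_le)
    have "x n / (MB * s n) \<le> x n / s (Suc n)"
      using h xpos[of n] spos[of n] spos[of "Suc n"] C by (intro frac_le) auto
    moreover have "x n / s (Suc n) \<le> x n / (mB * s n)"
      using h xpos[of n] spos[of n] spos[of "Suc n"] C by (intro frac_le) auto
    ultimately show ?thesis unfolding r_def h(3) by (simp add: field_simps)
  qed
  define I where "I = {mA .. 1 / mB}"
  have inv: "r (Suc n) \<in> I" if "r n \<in> I" for n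
  proof (cases "r n \<ge> 1")
    case True
    have "r n \<le> 1 / mB" using that by (simp add: I_def)
    then have "MA * r n \<le> MA * (1 / mB)" using C by (intro mult_left_mono) auto
    then have "r (Suc n) \<le> MA / mB" using rA[OF True] by simp
    moreover have "MA / mB \<le> 1 / mB" using C by (simp add: divide_right_mono)
    moreover have "mA * 1 \<le> mA * r n" using True C by (intro mult_left_mono) auto
    then have "mA \<le> r (Suc n)" using rA[OF True] by simp
    ultimately show ?thesis by (auto simp: I_def)
  next
    case False
    then have F: "r n < 1" by simp
    have "r n / MB \<ge> r n" using C rpos[of n] by (simp add: field_simps)
    moreover have "r n / mB \<le> 1 / mB" using F C by (simp add: divide_right_mono)
    ultimately show ?thesis using rB[OF F] that by (auto simp: I_def)
  qed
  have enter: "\<exists>n. r n \<in> I"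
  proof (cases "r 0 \<ge> 1")
    case True
    have "\<exists>n. r n < 1"
    proof (rule ccontr)
      assume "\<not> ?thesis"
      then have all: "r n \<ge> 1" for n by (simp add: not_less)
      have bnd: "r n \<le> MA ^ n * r 0" for n
      proof (induction n)
        case (Suc n)
        have "r (Suc n) \<le> MA * r n" using rA[OF all[of n]] by simp
        also have "\<dots> \<le> MA * (MA ^ n * r 0)" using Suc C by simp
        finally show ?case by (simp add: algebra_simps)
      qed simp
      obtain n where "MA ^ n < 1 / r 0" using real_arch_pow_inv[of "1 / r 0" MA] C rpos[of 0] by auto
      then have "MA ^ n * r 0 < 1" using rpos[of 0] by (simp add: field_simps)
      with bnd[of n] all[of n] show False by simp
    qed
    then have ex: "\<exists>n. r n < 1" .
    define n where "n = (LEAST n. r n < 1)"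
    have n1: "r n < 1" unfolding n_def by (rule LeastI_ex[OF ex])
    have nmin: "\<And>m. m < n \<Longrightarrow> r m \<ge> 1" unfolding n_def using not_less_Least by (simp add: not_less[symmetric]) blast
    have "n \<noteq> 0"
    proof
      assume "n = 0" with True n1 show False by simp
    qed
    then obtain k where k: "n = Suc k" by (cases n) auto
    have rk: "r k \<ge> 1" using nmin k by simp
    have "mA * 1 \<le> mA * r k" using rk C by (intro mult_left_mono) auto
    then have "mA \<le> r n" using rA[OF rk] k by simp
    moreover have "1 \<le> 1 / mB" using C by simp
    then have "r n \<le> 1 / mB" using n1 by linarith
    ultimately show ?thesis by (auto simp: I_def)
  next
    case False
    have "\<exists>n. r n \<ge> 1"
    proof (rule ccontr)
      assume "\<not> ?thesis"
      then have all: "r n < 1" for n by (simp add: not_le)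
      have bnd: "r n \<ge> (1/MB) ^ n * r 0" for n
      proof (induction n)
        case (Suc n)
        have "(1/MB) ^ Suc n * r 0 = (1/MB) * ((1/MB) ^ n * r 0)" by simp
        also have "\<dots> \<le> (1/MB) * r n" using Suc C by (intro mult_left_mono) auto
        also have "\<dots> \<le> r (Suc n)" using rB[OF all[of n]] by simp
        finally show ?case .
      qed simp
      obtain n where "1 / r 0 < (1/MB) ^ n" using real_arch_pow[of "1/MB" "1 / r 0"] C by auto
      then have "1 < (1/MB) ^ n * r 0" using rpos[of 0] by (simp add: field_simps)
      with bnd[of n] all[of n] show False by simp
    qed
    then have ex: "\<exists>n. r n \<ge> 1" .
    define n where "n = (LEAST n. r n \<ge> 1)"
    have n1: "r n \<ge> 1" unfolding n_def by (rule LeastI_ex[OF ex])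
    have nmin: "\<And>m. m < n \<Longrightarrow> r m < 1" unfolding n_def using not_less_Least by (simp add: not_le[symmetric]) blast
    have "n \<noteq> 0"
    proof
      assume "n = 0" with False n1 show False by simp
    qed
    then obtain k where k: "n = Suc k" by (cases n) auto
    have rk: "r k < 1" using nmin k by simp
    have "r k / mB < 1 / mB" using rk C by (intro divide_strict_right_mono) auto
    then have "r n \<le> 1 / mB" using rB[OF rk] k by simp
    moreover have "mA \<le> r n" using n1 C by simp
    ultimately show ?thesis by (auto simp: I_def)
  qed
  then obtain N where N: "r N \<in> I" by blast
  have inI: "r n \<in> I" if "n \<ge> N" for n
  proof -
    have "r (N + m) \<in> I" for m by (induction m) (use N inv in auto)
    from this[of "n - N"] that show ?thesis by simp
  qed
  have P1: "\<forall>n\<ge>N. x n / s n \<in> {mA .. 1 / mB}" using inI by (simp add: r_def I_def)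
  have noAA: "x n \<ge> s n \<longrightarrow> \<not> (x (Suc n) \<ge> s (Suc n))" if "n \<ge> N" for n
  proof
    assume "s n \<le> x n"
    then have h: "r n \<ge> 1" using iff by simp
    have "r n \<le> 1 / mB" using inI[OF that] by (simp add: I_def)
    then have "MA * r n \<le> MA * (1 / mB)" using C by (intro mult_left_mono) auto
    moreover have "MA / mB < 1" using C by simp
    ultimately have "r (Suc n) < 1" using rA[OF h] by simp
    then show "\<not> (x (Suc n) \<ge> s (Suc n))" using iff by (simp add: not_le)
  qed
  have noBBB: "\<not> (x n < s n \<and> x (n+1) < s (n+1) \<and> x (n+2) < s (n+2))" if "n \<ge> N" for n
  proof
    assume a: "x n < s n \<and> x (n+1) < s (n+1) \<and> x (n+2) < s (n+2)"
    then have b0: "r n < 1" and b1: "r (Suc n) < 1" and b2: "r (Suc (Suc n)) < 1"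
      using iff[of n] iff[of "Suc n"] iff[of "Suc (Suc n)"] by auto
    have "mA \<le> r n" using inI[OF that] by (simp add: I_def)
    have "r n / MB \<le> r (Suc n)" using rB[OF b0] by simp
    moreover have "r (Suc n) / MB \<le> r (Suc (Suc n))" using rB[OF b1] by simp
    moreover have "r n / MB / MB \<le> r (Suc n) / MB"
      using calculation C by (intro divide_right_mono) auto
    ultimately have "r n / MB / MB \<le> r (Suc (Suc n))" by linarith
    moreover have "r n / MB / MB \<ge> 1"
    proof -
      have "MB * MB \<le> r n" using \<open>mA \<le> r n\<close> C by linarith
      moreover have "MB * MB > 0" using C by simp
      ultimately have "1 \<le> r n / (MB * MB)" by (simp add: le_divide_eq_1_pos)
      then show ?thesis by (simp add: divide_divide_eq_left)
    qed
    ultimately show False using b2 by simp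
  qed
  have P4: "(\<exists>k\<in>{n..n+2}. x k \<ge> s k) \<and> (\<exists>k\<in>{n..n+2}. x k < s k)" if "n \<ge> N" for n
  proof
    show "\<exists>k\<in>{n..n+2}. x k \<ge> s k"
    proof (rule ccontr)
      assume "\<not> ?thesis"
      then have "x n < s n" "x (n+1) < s (n+1)" "x (n+2) < s (n+2)" by (auto simp: not_le)
      with noBBB[OF that] show False by simp
    qed
    show "\<exists>k\<in>{n..n+2}. x k < s k"
    proof (cases "x n < s n")
      case True then show ?thesis by auto
    next
      case False
      then have "x (Suc n) < s (Suc n)" using noAA[OF that] by auto
      then show ?thesis by (intro bexI[of _ "Suc n"]) auto
    qed
  qed
  have xdec: "x (Suc n) \<le> x n" for n
  proof (cases "x n \<ge> s n")
    case True
    have "MA * x n \<le> 1 * x n" using C xpos[of n] by (intro mult_right_mono) auto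
    then show ?thesis using Aburst[OF True] by simp
  next
    case False then show ?thesis using Bburst[of n] by simp
  qed
  have sdec: "s (Suc n) \<le> s n" for n
  proof (cases "x n < s n")
    case True
    have "MB * s n \<le> 1 * s n" using C spos[of n] by (intro mult_right_mono) auto
    then show ?thesis using Bburst[OF True] by simp
  next
    case False then show ?thesis using Aburst[of n] by simp
  qed
  have xlim: "x \<longlonglongrightarrow> 0"
  proof (rule decay_helper[of x, OF _ xdec, of MA N])
    fix n assume "n \<ge> N"
    from P4[OF this] obtain k where "k \<in> {n..n+2}" "x k \<ge> s k" by blast
    then show "\<exists>k\<in>{n..n+2}. x (Suc k) \<le> MA * x k" using Aburst[of k] by auto
  qed (use xpos C in \<open>auto intro: less_imp_le\<close>)
  have slim: "s \<longlonglongrightarrow> 0"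
  proof (rule decay_helper[of s, OF _ sdec, of MB N])
    fix n assume "n \<ge> N"
    from P4[OF this] obtain k where "k \<in> {n..n+2}" "x k < s k" by blast
    then show "\<exists>k\<in>{n..n+2}. s (Suc k) \<le> MB * s k" using Bburst[of k] by auto
  qed (use spos C in \<open>auto intro: less_imp_le\<close>)
  have L: "(\<lambda>n. x n + s n) \<longlonglongrightarrow> 0" using tendsto_add[OF xlim slim] by simp
  have E: "\<And>P. (\<And>n. n \<ge> N \<Longrightarrow> P n) \<Longrightarrow> eventually P sequentially"
    by (rule eventually_sequentiallyI)
  show ?thesis
  proof (intro conjI L)
    show "\<forall>\<^sub>F n in sequentially. x n / s n \<in> {mA .. 1 / mB}" using P1 by (intro E) blast
    show "\<forall>\<^sub>F n in sequentially. x n \<ge> s n \<longrightarrow> \<not> (x (Suc n) \<ge> s (Suc n))"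
      using noAA by (intro E) blast
    show "\<forall>\<^sub>F n in sequentially.
          \<not> (x n < s n \<and> x (n+1) < s (n+1) \<and> x (n+2) < s (n+2))"
      using noBBB by (intro E) blast
    show "\<forall>\<^sub>F n in sequentially.
          (\<exists>k\<in>{n..n+2}. x k \<ge> s k) \<and> (\<exists>k\<in>{n..n+2}. x k < s k)"
      using P4 by (intro E) blast
  qed
qed

end
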